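(* Let $n\ge1$, $k\in\{1,\dots,n\}$, scores $s_1,\dots,s_n\in\mathbb{R}$ not all equal, $p=\frac{n-k}{n}+\frac{1}{2n}$, $f_i(x)=\rho_p(s_i-x)$ and $f=\sum_{i=1}^n f_i$. Let $\tilde f_h=\sum_{i=1}^n\tilde f_i^h$ be a convex smooth approximation of $f$ with smoothing parameter $h$ satisfying the Standing Assumption below (with constants $L_h,M_h,U_h$), and let $\theta_k^h$ be a minimizer of $\tilde f_h$ over $\mathbb{R}$. If $U_h\le \frac{g_m\Delta}{8}$ and $x\in\mathbb{R}$ satisfies $\tilde f_h(x)-\tilde f_h(\theta_k^h)<\frac{g_m\Delta}{4}$, then $|x-\theta_k|\le\frac{\Delta}{2}$.
   Context: The pinball loss is $\rho_p(x)=p\,x$ if $x\ge0$ and $\rho_p(x)=-(1-p)x$ if $x<0$. The scores sorted in descending order are $\theta_1\ge\cdots\ge\theta_n$; $\theta_k$ is the $k$-th largest score (the unique minimizer of $f$). $\overline{m}$ is the number of indices $j\le k$ with $\theta_j=\theta_k$, $\underline{m}$ is the number of indices $j>k$ with $\theta_j=\theta_k$, $g_m=\min\{\overline{m}-\frac12,\underline{m}+\frac12\}$, and $\Delta=\min\{|s_i-\theta_k|: s_i\ne\theta_k\}$. Standing Assumption: each $\tilde f_i^h:\mathbb{R}\to\mathbb{R}$ is convex and differentiable, $\tilde f_h=\sum_i\tilde f_i^h$ satisfies $|\tilde f_h(x)-\tilde f_h(y)|\le L_h|x-y|$ and $|\tilde f_h'(x)-\tilde f_h'(y)|\le M_h|x-y|$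 for all $x,y$, $|f(x)-\tilde f_h(x)|\le U_h$ for all $x$, and each $\tilde f_i^h$ satisfies $|(\tilde f_i^h)'(x)-(\tilde f_i^h)'(y)|\le\frac{M_h}{n}|x-y|$ for all $x,y$. *)

theory Defs
  imports "HOL-Analysis.Analysis"
begin

definition pinball :: "real \<Rightarrow> real \<Rightarrow> real" where
  "pinball p x = (if x \<ge> 0 then p * x else - (1 - p) * x)"

text \<open>Scores s_1..s_n sorted in descending order; sorted_desc s n j is theta_j (1-based, 1 \<le> j \<le> n).\<close>
definition sorted_desc :: "(nat \<Rightarrow> real) \<Rightarrow> nat \<Rightarrow> nat \<Rightarrow> real" where
  "sorted_desc s n j = rev (sort (map s [1..<n+1])) ! (j - 1)"

definition m_upper :: "(nat \<Rightarrow> real) \<Rightarrow> nat \<Rightarrow> nat \<Rightarrow> nat" where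
  "m_upper s n k = card {j \<in> {1..k}. sorted_desc s n j = sorted_desc s n k}"

definition m_lower :: "(nat \<Rightarrow> real) \<Rightarrow> nat \<Rightarrow> nat \<Rightarrow> nat" where
  "m_lower s n k = card {j \<in> {k+1..n}. sorted_desc s n j = sorted_desc s n k}"

definition gap_m :: "(nat \<Rightarrow> real) \<Rightarrow> nat \<Rightarrow> nat \<Rightarrow> real" where
  "gap_m s n k = min (real (m_upper s n k) - 1/2) (real (m_lower s n k) + 1/2)"

definition Delta :: "(nat \<Rightarrow> real) \<Rightarrow> nat \<Rightarrow> nat \<Rightarrow> real" where
  "Delta s n k = Min {\<bar>s i - sorted_desc s n k\<bar> | i. i \<in> {1..n} \<and> s i \<noteq> sorted_desc s n k}"

end

theory Submission
  imports Defs "HOL-Library.Multiset"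
begin

lemma len_filter_perm: "length (filter P (rev (sort xs))) = length (filter P (xs::real list))"
  by (metis mset_filter mset_rev mset_sort size_mset)

lemma card_shift: "card {i\<in>{1..n}. P (f (i - 1))} = card {i::nat. i < n \<and> P (f i)}"
proof -
  have "{i\<in>{1..n}. P (f (i - 1))} = Suc ` {i. i < n \<and> P (f i)}"
  proof (auto simp: image_iff)
    fix x assume "Suc 0 \<le> x" "x \<le> n" "P (f (x - Suc 0))"
    then show "\<exists>xa<n. P (f xa) \<and> x = Suc xa" by (intro exI[of _ "x - 1"]) auto
  qed
  then show ?thesis by (simp add: card_image)
qed

lemma count_eq:
  fixes s :: "nat \<Rightarrow> real"
  shows "card {j\<in>{1..n}. P (sorted_desc s n j)} = card {i\<in>{1..n}. P (s i)}"
proof -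
  let ?xs = "map s [1..<n+1]"
  have "card {j\<in>{1..n}. P (sorted_desc s n j)} = card {i. i < n \<and> P (rev (sort ?xs) ! i)}"
    unfolding sorted_desc_def by (rule card_shift)
  also have "\<dots> = length (filter P (rev (sort ?xs)))"
    by (simp add: length_filter_conv_card)
  also have "\<dots> = length (filter P ?xs)" by (rule len_filter_perm)
  also have "\<dots> = card {i. i < n \<and> P (?xs ! i)}"
    by (simp add: length_filter_conv_card)
  also have "\<dots> = card {i. i < n \<and> P (s (i+1))}"
  proof -
    have "\<And>i. i < n \<Longrightarrow> ?xs ! i = s (i+1)"
      by (subst nth_map_upt) auto
    then show ?thesis by (intro arg_cong[where f=card]) auto
  qed
  also have "\<dots> = card {i\<in>{1..n}. P (s (i - 1 + 1))}"
    by (rule card_shift[symmetric])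
  also have "\<dots> = card {i\<in>{1..n}. P (s i)}"
    by (rule arg_cong[where f=card]) auto
  finally show ?thesis .
qed

lemma sorted_desc_mono:
  fixes s :: "nat \<Rightarrow> real"
  assumes "1 \<le> i" "i \<le> j" "j \<le> n"
  shows "sorted_desc s n j \<le> sorted_desc s n i"
proof -
  let ?zs = "sort (map s [1..<n+1])"
  have len: "length ?zs = n" by simp
  have "?zs ! (n - j) \<le> ?zs ! (n - i)"
    by (rule sorted_nth_mono) (use assms in auto)
  then show ?thesis unfolding sorted_desc_def using assms len
    by (simp add: rev_nth Suc_diff_le)
qed


lemma pin_right:
  assumes "0 \<le> p" "p \<le> 1" "t \<ge> 0"
  shows "pinball p (a - t) - pinball p a \<ge> (if a > 0 then - p * t else (1 - p) * t)"
  using assms unfolding pinball_def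
  by (auto simp: algebra_simps mult_left_mono)

lemma pin_left:
  assumes "0 \<le> p" "p \<le> 1" "t \<ge> 0"
  shows "pinball p (a + t) - pinball p a \<ge> (if a < 0 then - (1 - p) * t else p * t)"
  using assms unfolding pinball_def
  by (auto simp: algebra_simps mult_left_mono)

lemma sum_if_const:
  assumes "finite S"
  shows "(\<Sum>i\<in>S. if Q i then a else b) = real (card {i\<in>S. Q i}) * a + (real (card S) - real (card {i\<in>S. Q i})) * (b::real)"
proof -
  have "(\<Sum>i\<in>S. if Q i then a else b) = (\<Sum>i\<in>S. b + (if Q i then a - b else 0))"
    by (rule sum.cong) auto
  also have "\<dots> = real (card S) * b + (\<Sum>i\<in>{i\<in>S. Q i}. a - b)"
    by (simp add: sum.distrib sum.inter_filter[symmetric] assms)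
  also have "\<dots> = real (card {i\<in>S. Q i}) * a + (real (card S) - real (card {i\<in>S. Q i})) * b"
    by (simp add: algebra_simps)
  finally show ?thesis .
qed

theorem theorem1:
  fixes n k :: nat and s :: "nat \<Rightarrow> real"
    and ft :: "nat \<Rightarrow> real \<Rightarrow> real"
    and L M U theta_h x :: real
  assumes n_pos: "n \<ge> 1"
    and k_range: "k \<in> {1..n}"
    and not_all_equal: "\<exists>i\<in>{1..n}. \<exists>j\<in>{1..n}. s i \<noteq> s j"
    and convex: "\<And>i. i \<in> {1..n} \<Longrightarrow> convex_on UNIV (ft i)"
    and differentiable: "\<And>i y. i \<in> {1..n} \<Longrightarrow> ft i differentiable (at y)"
    and lipschitz: "\<And>y z. \<bar>(\<Sum>i=1..n. ft i y) - (\<Sum>i=1..n. ft i z)\<bar> \<le> L * \<bar>y - z\<bar>"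
    and smooth: "\<And>y z. \<bar>deriv (\<lambda>t. \<Sum>i=1..n. ft i t) y - deriv (\<lambda>t. \<Sum>i=1..n. ft i t) z\<bar>
                        \<le> M * \<bar>y - z\<bar>"
    and approx: "\<And>y. \<bar>(\<Sum>i=1..n. pinball ((real n - real k) / real n + 1 / (2 * real n)) (s i - y))
                        - (\<Sum>i=1..n. ft i y)\<bar> \<le> U"
    and smooth_i: "\<And>i y z. i \<in> {1..n} \<Longrightarrow>
                        \<bar>deriv (ft i) y - deriv (ft i) z\<bar> \<le> M / real n * \<bar>y - z\<bar>"
    and minimizer: "\<And>y. (\<Sum>i=1..n. ft i theta_h) \<le> (\<Sum>i=1..n. ft i y)"
    and U_small: "U \<le> gap_m s n k * Delta s n k / 8"
    and x_good: "(\<Sum>i=1..n. ft i x) - (\<Sum>i=1..n. ft i theta_h) < gap_m s n k * Delta s n k / 4"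
  shows "\<bar>x - sorted_desc s n k\<bar> \<le> Delta s n k / 2"
proof -
  define p where "p = (real n - real k) / real n + 1 / (2 * real n)"
  define c where "c = sorted_desc s n k"
  define F where "F = (\<lambda>y. \<Sum>i=1..n. pinball p (s i - y))"
  define G where "G = (\<lambda>y. \<Sum>i=1..n. ft i y)"
  define A where "A = card {i\<in>{1..n}. s i > c}"
  define B where "B = card {i\<in>{1..n}. s i < c}"
  define g where "g = gap_m s n k"
  define D where "D = Delta s n k"
  have kn: "1 \<le> k" "k \<le> n" using k_range by auto
  have np: "real n * p = real n - real k + 1/2" using n_pos unfolding p_def by (simp add: field_simps)
  have pe: "p = (real n - real k + 1/2) / real n" using np n_pos by (simp add: field_simps)
  have p01: "0 \<le> p" "p \<le> 1" unfolding pe using kn n_pos by (auto simp: divide_le_eq_1)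
  have FG: "\<bar>F y - G y\<bar> \<le> U" for y using approx[of y] unfolding F_def G_def p_def by simp
  have mu1: "m_upper s n k \<ge> 1"
  proof -
    have "k \<in> {j \<in> {1..k}. sorted_desc s n j = sorted_desc s n k}" using kn by auto
    then have "{j \<in> {1..k}. sorted_desc s n j = sorted_desc s n k} \<noteq> {}" by blast
    moreover have "finite {j \<in> {1..k}. sorted_desc s n j = sorted_desc s n k}" by simp
    ultimately show ?thesis unfolding m_upper_def
      by (simp add: Suc_le_eq card_gt_0_iff)
  qed
  have Au: "A + m_upper s n k \<le> k"
  proof -
    have "A = card {j\<in>{1..n}. sorted_desc s n j > c}" unfolding A_def by (rule count_eq[symmetric])
    also have "\<dots> \<le> card {j\<in>{1..k}. sorted_desc s n j \<noteq> c}"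
    proof (rule card_mono)
      show "{j \<in> {1..n}. c < sorted_desc s n j} \<subseteq> {j \<in> {1..k}. sorted_desc s n j \<noteq> c}"
      proof
        fix j assume j: "j \<in> {j \<in> {1..n}. c < sorted_desc s n j}"
        have "j \<le> k"
        proof (rule ccontr)
          assume "\<not> j \<le> k"
          then have "sorted_desc s n j \<le> c" unfolding c_def using j kn
            by (intro sorted_desc_mono) auto
          then show False using j by auto
        qed
        then show "j \<in> {j \<in> {1..k}. sorted_desc s n j \<noteq> c}" using j by auto
      qed
    qed auto
    finally have "A \<le> card {j\<in>{1..k}. sorted_desc s n j \<noteq> c}" .
    moreover have "card {j\<in>{1..k}. sorted_desc s n j \<noteq> c} + m_upper s n k = k"
    proof -
      have "card {j\<in>{1..k}. sorted_desc s n j \<noteq> c} + m_upper s n k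
          = card ({j\<in>{1..k}. sorted_desc s n j \<noteq> c} \<union> {j\<in>{1..k}. sorted_desc s n j = c})"
        unfolding m_upper_def c_def by (subst card_Un_disjoint) auto
      also have "\<dots> = card {1..k}" by (rule arg_cong[where f=card]) auto
      finally show ?thesis by simp
    qed
    ultimately show ?thesis by simp
  qed
  have Bl: "B + m_lower s n k \<le> n - k"
  proof -
    have "B = card {j\<in>{1..n}. sorted_desc s n j < c}" unfolding B_def by (rule count_eq[symmetric])
    also have "\<dots> \<le> card {j\<in>{k+1..n}. sorted_desc s n j \<noteq> c}"
    proof (rule card_mono)
      show "{j \<in> {1..n}. sorted_desc s n j < c} \<subseteq> {j \<in> {k+1..n}. sorted_desc s n j \<noteq> c}"
      proof
        fix j assume j: "j \<in> {j \<in> {1..n}. sorted_desc s n j < c}"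
        have "k < j"
        proof (rule ccontr)
          assume "\<not> k < j"
          then have "c \<le> sorted_desc s n j" unfolding c_def using j kn
            by (intro sorted_desc_mono) auto
          then show False using j by auto
        qed
        then show "j \<in> {j \<in> {k+1..n}. sorted_desc s n j \<noteq> c}" using j by auto
      qed
    qed auto
    finally have "B \<le> card {j\<in>{k+1..n}. sorted_desc s n j \<noteq> c}" .
    moreover have "card {j\<in>{k+1..n}. sorted_desc s n j \<noteq> c} + m_lower s n k = n - k"
    proof -
      have "card {j\<in>{k+1..n}. sorted_desc s n j \<noteq> c} + m_lower s n k
          = card ({j\<in>{k+1..n}. sorted_desc s n j \<noteq> c} \<union> {j\<in>{k+1..n}. sorted_desc s n j = c})"
        unfolding m_lower_def c_def by (subst card_Un_disjoint) auto
      also have "\<dots> = card {k+1..n}" by (rule arg_cong[where f=card]) auto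
      finally show ?thesis by simp
    qed
    ultimately show ?thesis by simp
  qed
  have g_pos: "g \<ge> 1/2" unfolding g_def gap_m_def using mu1 by auto
  have gl: "g \<le> real (m_upper s n k) - 1/2" "g \<le> real (m_lower s n k) + 1/2"
    unfolding g_def gap_m_def by auto
  have key: "F x - F c \<ge> g * \<bar>x - c\<bar>"
  proof (cases "x \<ge> c")
    case True
    define t where "t = x - c"
    have t0: "t \<ge> 0" using True t_def by simp
    have "F x - F c = (\<Sum>i=1..n. pinball p ((s i - c) - t) - pinball p (s i - c))"
      unfolding F_def sum_subtractf[symmetric] by (rule sum.cong) (simp_all add: t_def)
    also have "\<dots> \<ge> (\<Sum>i=1..n. if s i - c > 0 then - p * t else (1 - p) * t)"
      by (rule sum_mono) (rule pin_right[OF p01 t0])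
    also have "(\<Sum>i=1..n. if s i - c > 0 then - p * t else (1 - p) * t)
        = real A * (- p * t) + (real n - real A) * ((1 - p) * t)"
      unfolding A_def by (subst sum_if_const) auto
    also have "\<dots> = t * (real n - real n * p - real A)" by (simp add: algebra_simps)
    also have "\<dots> = t * (real k - 1/2 - real A)" using np by simp
    finally have "F x - F c \<ge> t * (real k - 1/2 - real A)" .
    moreover have "real k - 1/2 - real A \<ge> g" using Au gl by linarith
    then have "t * g \<le> t * (real k - 1/2 - real A)" by (rule mult_left_mono) (rule t0)
    ultimately have "F x - F c \<ge> t * g" by linarith
    then show ?thesis using t_def True by (simp add: mult.commute)
  next
    case False
    define t where "t = c - x"
    have t0: "t \<ge> 0" using False t_def by simp
    have "F x - F c = (\<Sum>i=1..n. pinball p ((s i - c) + t) - pinball p (s i - c))"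
      unfolding F_def sum_subtractf[symmetric] by (rule sum.cong) (simp_all add: t_def)
    also have "\<dots> \<ge> (\<Sum>i=1..n. if s i - c < 0 then - (1 - p) * t else p * t)"
      by (rule sum_mono) (rule pin_left[OF p01 t0])
    also have "(\<Sum>i=1..n. if s i - c < 0 then - (1 - p) * t else p * t)
        = real B * (- (1 - p) * t) + (real n - real B) * (p * t)"
      unfolding B_def by (subst sum_if_const) auto
    also have "\<dots> = t * (real n * p - real B)" by (simp add: algebra_simps)
    also have "\<dots> = t * (real n - real k + 1/2 - real B)" using np by simp
    finally have "F x - F c \<ge> t * (real n - real k + 1/2 - real B)" .
    moreover have "real n - real k + 1/2 - real B \<ge> g" using Bl gl kn by (simp add: of_nat_diff)
    then have "t * g \<le> t * (real n - real k + 1/2 - real B)" by (rule mult_left_mono) (rule t0)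
    ultimately have "F x - F c \<ge> t * g" by linarith
    then show ?thesis using t_def False by (simp add: mult.commute)
  qed
  have "F x - F c < g * D / 2"
  proof -
    have "F x \<le> G x + U" using FG[of x] by linarith
    moreover have "G x < G theta_h + g * D / 4" using x_good unfolding G_def g_def D_def by simp
    moreover have "G theta_h \<le> G c" using minimizer unfolding G_def by simp
    moreover have "G c \<le> F c + U" using FG[of c] by linarith
    moreover have "U \<le> g * D / 8" using U_small unfolding g_def D_def by simp
    ultimately show ?thesis by linarith
  qed
  with key have "g * \<bar>x - c\<bar> < g * (D / 2)" by simp
  then have "\<bar>x - c\<bar> < D / 2" using g_pos by (simp add: mult_less_cancel_left_pos)
  then show ?thesis unfolding c_def D_def by simp
qed

end
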